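(* Consider a regular spherically symmetric, asymptotically flat initial data set for the Einstein–Maxwell equations (with no magnetic charge). Assume there is a ball $\mathcal{B}=\{l\le l_0\}$ of finite area radius $\mathcal{R}=r(l_0)>0$ such that outside $\mathcal{B}$ (i.e. for $l\ge l_0$) the data are electrovacuum, and such that the dominant energy condition $\mu\ge |j|$ holds in $\mathcal{B}$. Let $Q$ be the total charge of $\mathcal{B}$ and assume $Q\neq 0$. Then: (i) If the exterior region $\{l\ge l_0\}$ is untrapped, then $2\mathcal{R}>|Q|$. (ii) If there is a horizon outside $\mathcal{B}$, then its area radius $\mathcal{R}_0$ satisfies $\mathcal{R}_0\ge |Q|$; equality holds for the horizon of the extreme Reissner–Nordström black hole ($M=|Q|$).
   Context: Regular spherically symmetric initial data: the manifold is $\mathbb{R}^3$ with metric $h=dl^2+r(l)^2(d\theta^2+\sin^2\theta\,d\phi^2)$, where $l\ge0$ is the geodesic distance to the center and $r(l)$ (the area radius) is smooth on $[0,\infty)$ with $r(0)=0$, $r'(0)=1$. The second fundamental form is $K_{ij}=n_in_jK_l+(h_{ij}-n_in_j)K_r$ with $n=\partial_l$ and functions $K_l(l),K_r(l)$. The constraint equations are $K_r(K_r+2K_l)-\frac{1}{r^2}(r'^2+2rr''-1)=8\pi\mu$, $\;K_r'+\frac{r'}{r}(K_r-K_l)=4\pi j$, where $\mu$ is the energy density and $j$ the radial momentum density. The dominant energy condition is $\mu\ge|j|$. The electric and magnetic fields are radial, $E=E^in_i$, $B=B^in_i$, satisfying $\frac{1}{r^2}(Er^2)'=4\pi\rho$,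 $\frac1{r^2}(Br^2)'=0$ with $\rho$ the charge density; no magnetic charges means $B=0$. Also $\mu=\mu_M+\frac1{8\pi}(E^2+B^2)$ with $\mu_M$ the non-electromagnetic energy density. Electrovacuum means $\mu_M=0$, $j=0$, $\rho=0$. The charge of $\mathcal{B}$ is $Q=4\pi\int_0^{l_0}\rho r^2\,dl=E(l_0)r(l_0)^2$. Asymptotic flatness: in Cartesian coordinates $h_{ij}=\delta_{ij}+\gamma_{ij}$ with $\gamma_{ij}=O(r^{-1})$, $\partial\gamma=O(r^{-2})$, $\partial^2\gamma=O(r^{-3})$, $K_{ij}=O(r^{-2})$, $\partial K=O(r^{-3})$; in particular $r(l)\to\infty$, $r'\to1$, $rK_r\to0$ as $l\to\infty$. Null expansions of the sphere at $l$: $\theta^\pm=\frac2r(r'\pm K_r r)$. A region between two concentric spheres is untrapped if $\theta^+\theta^->0$ there and trapped if $\theta^+\theta^-<0$. A horizon is the outer boundary of a trapped region; it satisfies $\theta^+\theta^-=0$, and $\mathcal{R}_0$ denotes its area radius. The mass $M$ of the data is the ADM mass, equal to $\lim_{l\to\infty}\mathcal{E}$ where $\mathcal{E}=\frac r2\bigl(1-\frac{r^2}{4}\theta^+\theta^-\bigr)$ is the Misner–Sharp energy. *)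

theory Defs
  imports "HOL-Analysis.Analysis"
begin

text \<open>Spherically symmetric initial data, all quantities as functions of the
  geodesic distance l \<ge> 0 to the centre.  r is the area radius, r1, r2 its first and
  second derivatives; KL, KR the components of the second fundamental form, KR1 the
  derivative of KR; mu the energy density, j the radial momentum density,
  muM the non-electromagnetic energy density, E the radial electric field,
  rho the charge density.  The magnetic field is B = 0 (no magnetic charges).\<close>

definition theta_plus :: "(real \<Rightarrow> real) \<Rightarrow> (real \<Rightarrow> real) \<Rightarrow> (real \<Rightarrow> real) \<Rightarrow> real \<Rightarrow> real" where
  "theta_plus r r1 KR l = 2 / r l * (r1 l + KR l * r l)"

definition theta_minus :: "(real \<Rightarrow> real) \<Rightarrow> (real \<Rightarrow> real) \<Rightarrow> (real \<Rightarrow> real) \<Rightarrow> real \<Rightarrow> real" where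
  "theta_minus r r1 KR l = 2 / r l * (r1 l - KR l * r l)"

definition misner_sharp :: "(real \<Rightarrow> real) \<Rightarrow> (real \<Rightarrow> real) \<Rightarrow> (real \<Rightarrow> real) \<Rightarrow> real \<Rightarrow> real" where
  "misner_sharp r r1 KR l =
     r l / 2 * (1 - (r l)\<^sup>2 / 4 * (theta_plus r r1 KR l * theta_minus r r1 KR l))"

definition adm_mass :: "(real \<Rightarrow> real) \<Rightarrow> (real \<Rightarrow> real) \<Rightarrow> (real \<Rightarrow> real) \<Rightarrow> real" where
  "adm_mass r r1 KR = Lim at_top (misner_sharp r r1 KR)"

definition ss_EM_data ::
  "(real \<Rightarrow> real) \<Rightarrow> (real \<Rightarrow> real) \<Rightarrow> (real \<Rightarrow> real) \<Rightarrow> (real \<Rightarrow> real) \<Rightarrow> (real \<Rightarrow> real)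
   \<Rightarrow> (real \<Rightarrow> real) \<Rightarrow> (real \<Rightarrow> real) \<Rightarrow> (real \<Rightarrow> real) \<Rightarrow> (real \<Rightarrow> real) \<Rightarrow> (real \<Rightarrow> real)
   \<Rightarrow> (real \<Rightarrow> real) \<Rightarrow> bool" where
  "ss_EM_data r r1 r2 KL KR KR1 mu j muM E rho \<longleftrightarrow>
     \<comment> \<open>regularity / smoothness (C^2 area radius, C^1 extrinsic curvature)\<close>
     (\<forall>l\<ge>0. (r has_real_derivative r1 l) (at l within {0..})) \<and>
     (\<forall>l\<ge>0. (r1 has_real_derivative r2 l) (at l within {0..})) \<and>
     continuous_on {0..} r2 \<and>
     (\<forall>l\<ge>0. (KR has_real_derivative KR1 l) (at l within {0..})) \<and>
     continuous_on {0..} KR1 \<and> continuous_on {0..} KL \<and>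
     continuous_on {0..} mu \<and> continuous_on {0..} j \<and> continuous_on {0..} muM \<and>
     continuous_on {0..} E \<and> continuous_on {0..} rho \<and>
     \<comment> \<open>regular centre; r is positive away from the centre\<close>
     r 0 = 0 \<and> r1 0 = 1 \<and> (\<forall>l>0. r l > 0) \<and>
     \<comment> \<open>constraint equations\<close>
     (\<forall>l>0. KR l * (KR l + 2 * KL l) - ((r1 l)\<^sup>2 + 2 * r l * r2 l - 1) / (r l)\<^sup>2 = 8 * pi * mu l) \<and>
     (\<forall>l>0. KR1 l + r1 l / r l * (KR l - KL l) = 4 * pi * j l) \<and>
     \<comment> \<open>Maxwell constraint (E r^2)' = 4 pi rho r^2; B = 0\<close>
     (\<forall>l\<ge>0. ((\<lambda>s. E s * (r s)\<^sup>2) has_real_derivative 4 * pi * rho l * (r l)\<^sup>2) (at l within {0..})) \<and>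
     \<comment> \<open>energy density split (B = 0)\<close>
     (\<forall>l\<ge>0. mu l = muM l + (E l)\<^sup>2 / (8 * pi)) \<and>
     \<comment> \<open>asymptotic flatness (consequences in spherical symmetry)\<close>
     filterlim r at_top at_top \<and> (r1 \<longlongrightarrow> 1) at_top \<and>
     ((\<lambda>l. r l * KR l) \<longlongrightarrow> 0) at_top \<and>
     (\<exists>C. \<forall>\<^sub>F l in at_top. \<bar>(r l)\<^sup>2 * KR l\<bar> \<le> C \<and> \<bar>(r l)\<^sup>2 * KL l\<bar> \<le> C)"

end

theory Submission
  imports Defs
begin

lemma within_to_at:
  fixes f :: "real \<Rightarrow> real"
  assumes "(f has_real_derivative D) (at l within {0..})" "l > 0"
  shows "(f has_real_derivative D) (at l)"
proof -
  have "l \<in> interior {0..}" using assms(2) by simp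
  then have "at l within {0..} = at l" by (rule at_within_interior)
  with assms(1) show ?thesis by simp
qed

lemma ms_eq:
  "misner_sharp r r1 KR l = r l / 2 * (1 - (r1 l)\<^sup>2 + (KR l)\<^sup>2 * (r l)\<^sup>2)"
proof (cases "r l = 0")
  case True then show ?thesis by (simp add: misner_sharp_def)
next
  case False then show ?thesis
    by (simp add: misner_sharp_def theta_plus_def theta_minus_def field_simps power2_eq_square)
qed

lemma tt_eq:
  assumes "r l > 0"
  shows "theta_plus r r1 KR l * theta_minus r r1 KR l = 4 / (r l)\<^sup>2 * ((r1 l)\<^sup>2 - (KR l)\<^sup>2 * (r l)\<^sup>2)"
  using assms by (simp add: theta_plus_def theta_minus_def field_simps power2_eq_square)

lemma sign_help:
  fixes c t g :: real
  assumes "c > 0" "t = c * g"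
  shows "(t > 0 \<longleftrightarrow> g > 0)" "(t = 0 \<longleftrightarrow> g = 0)"
  using assms by (auto simp: zero_less_mult_iff)

theorem theorem1:
  fixes r r1 r2 KL KR KR1 mu j muM E rho :: "real \<Rightarrow> real" and l0 :: real
  assumes data: "ss_EM_data r r1 r2 KL KR KR1 mu j muM E rho"
    and l0_pos: "l0 > 0" and R_pos: "r l0 > 0"
    and electrovac: "\<forall>l\<ge>l0. muM l = 0 \<and> j l = 0 \<and> rho l = 0"
    and dec: "\<forall>l\<in>{0..l0}. mu l \<ge> \<bar>j l\<bar>"
    and Q_nz: "E l0 * (r l0)\<^sup>2 \<noteq> 0"
  shows "((\<forall>l\<ge>l0. theta_plus r r1 KR l * theta_minus r r1 KR l > 0)
            \<longrightarrow> 2 * r l0 > \<bar>E l0 * (r l0)\<^sup>2\<bar>)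
       \<and> (\<forall>l1 lh. 0 \<le> l1 \<and> l1 < lh \<and> l0 \<le> lh
            \<and> (\<forall>l\<in>{l1<..<lh}. theta_plus r r1 KR l * theta_minus r r1 KR l < 0)
            \<and> theta_plus r r1 KR lh * theta_minus r r1 KR lh = 0
            \<and> (\<forall>l>lh. theta_plus r r1 KR l * theta_minus r r1 KR l > 0)
            \<longrightarrow> r lh \<ge> \<bar>E l0 * (r l0)\<^sup>2\<bar>
              \<and> (adm_mass r r1 KR = \<bar>E l0 * (r l0)\<^sup>2\<bar> \<longrightarrow> r lh = \<bar>E l0 * (r l0)\<^sup>2\<bar>))"
proof -
  note D = data[unfolded ss_EM_data_def]
  have dr: "\<And>l. l \<ge> 0 \<Longrightarrow> (r has_real_derivative r1 l) (at l within {0..})" using D by blast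
  have dr1: "\<And>l. l \<ge> 0 \<Longrightarrow> (r1 has_real_derivative r2 l) (at l within {0..})" using D by blast
  have dKR: "\<And>l. l \<ge> 0 \<Longrightarrow> (KR has_real_derivative KR1 l) (at l within {0..})" using D by blast
  have rpos: "\<And>l. l > 0 \<Longrightarrow> r l > 0" using D by blast
  have r0: "r 0 = 0" using D by blast
  have ham: "\<And>l. l > 0 \<Longrightarrow> KR l * (KR l + 2 * KL l) - ((r1 l)\<^sup>2 + 2 * r l * r2 l - 1) / (r l)\<^sup>2 = 8 * pi * mu l"
    using D by blast
  have mom: "\<And>l. l > 0 \<Longrightarrow> KR1 l + r1 l / r l * (KR l - KL l) = 4 * pi * j l" using D by blast
  have dEr: "\<And>l. l \<ge> 0 \<Longrightarrow> ((\<lambda>s. E s * (r s)\<^sup>2) has_real_derivative 4 * pi * rho l * (r l)\<^sup>2) (at l within {0..})"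
    using D by blast
  have musplit: "\<And>l. l \<ge> 0 \<Longrightarrow> mu l = muM l + (E l)\<^sup>2 / (8 * pi)" using D by blast
  have rinf: "filterlim r at_top at_top" using D by blast
  have cr: "continuous_on {0..} r" by (rule DERIV_continuous_on) (use dr in auto)
  have cr1: "continuous_on {0..} r1" by (rule DERIV_continuous_on) (use dr1 in auto)
  have cKR: "continuous_on {0..} KR" by (rule DERIV_continuous_on) (use dKR in auto)
  have cEr: "continuous_on {0..} (\<lambda>s. E s * (r s)\<^sup>2)" by (rule DERIV_continuous_on) (use dEr in auto)
  define Ems where "Ems l = r l / 2 * (1 - (r1 l)\<^sup>2 + (KR l)\<^sup>2 * (r l)\<^sup>2)" for l
  define TT where "TT l = theta_plus r r1 KR l * theta_minus r r1 KR l" for l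
  define Q where "Q = E l0 * (r l0)\<^sup>2"
  have msE: "misner_sharp r r1 KR = Ems" by (rule ext) (simp add: ms_eq Ems_def)
  have cEms: "continuous_on {0..} Ems" unfolding Ems_def
    by (intro continuous_intros cr cr1 cKR) auto
  have dEms: "(Ems has_real_derivative 4 * pi * (r l)\<^sup>2 * (mu l * r1 l + j l * KR l * r l)) (at l)"
    if l: "l > 0" for l
  proof -
    have a: "(r has_real_derivative r1 l) (at l)" using within_to_at dr l by auto
    have b: "(r1 has_real_derivative r2 l) (at l)" using within_to_at dr1 l by auto
    have c: "(KR has_real_derivative KR1 l) (at l)" using within_to_at dKR l by auto
    have "(Ems has_real_derivative
       r1 l / 2 * (1 - (r1 l)\<^sup>2 + (KR l)\<^sup>2 * (r l)\<^sup>2)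
       + r l / 2 * (- 2 * r1 l * r2 l + 2 * KR l * KR1 l * (r l)\<^sup>2 + 2 * (KR l)\<^sup>2 * r l * r1 l)) (at l)"
      unfolding Ems_def[abs_def]
      by (rule derivative_eq_intros a b c refl | simp)+
    moreover have "r1 l / 2 * (1 - (r1 l)\<^sup>2 + (KR l)\<^sup>2 * (r l)\<^sup>2)
       + r l / 2 * (- 2 * r1 l * r2 l + 2 * KR l * KR1 l * (r l)\<^sup>2 + 2 * (KR l)\<^sup>2 * r l * r1 l)
       = 4 * pi * (r l)\<^sup>2 * (mu l * r1 l + j l * KR l * r l)"
    proof -
      have rp: "r l > 0" using rpos l by auto
      have h1: "8 * pi * mu l * (r l)\<^sup>2 = KR l * (KR l + 2 * KL l) * (r l)\<^sup>2 - ((r1 l)\<^sup>2 + 2 * r l * r2 l - 1)"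
        using ham[OF l] rp by (simp add: field_simps)
      have h2: "4 * pi * j l * r l = KR1 l * r l + r1 l * (KR l - KL l)"
        using mom[OF l] rp by (simp add: field_simps)
      have "4 * pi * (r l)\<^sup>2 * (mu l * r1 l + j l * KR l * r l)
          = r1 l / 2 * (8 * pi * mu l * (r l)\<^sup>2) + KR l * (r l)\<^sup>2 * (4 * pi * j l * r l)"
        by (simp add: algebra_simps power2_eq_square)
      also have "\<dots> = r1 l / 2 * (KR l * (KR l + 2 * KL l) * (r l)\<^sup>2 - ((r1 l)\<^sup>2 + 2 * r l * r2 l - 1))
           + KR l * (r l)\<^sup>2 * (KR1 l * r l + r1 l * (KR l - KL l))"
        by (simp only: h1 h2)
      finally show ?thesis by (simp add: algebra_simps power2_eq_square)
    qed
    ultimately show ?thesis by simp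
  qed
  have TTeq: "TT l = 4 / (r l)\<^sup>2 * ((r1 l)\<^sup>2 - (KR l)\<^sup>2 * (r l)\<^sup>2)" if "l > 0" for l
    unfolding TT_def using tt_eq rpos that by blast
  have EQ: "E l * (r l)\<^sup>2 = Q" if "l \<ge> l0" for l
  proof (cases "l = l0")
    case True then show ?thesis by (simp add: Q_def)
  next
    case False
    then have lt: "l0 < l" using that by simp
    show ?thesis unfolding Q_def
    proof (rule DERIV_isconst_end[OF lt])
      show "continuous_on {l0..l} (\<lambda>s. E s * (r s)\<^sup>2)"
        using cEr by (rule continuous_on_subset) (use l0_pos in auto)
      fix x assume x: "l0 < x" "x < l"
      have "((\<lambda>s. E s * (r s)\<^sup>2) has_real_derivative 4 * pi * rho x * (r x)\<^sup>2) (at x)"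
        using within_to_at[OF dEr] x l0_pos by auto
      moreover have "rho x = 0" using electrovac x by auto
      ultimately show "((\<lambda>s. E s * (r s)\<^sup>2) has_real_derivative 0) (at x)" by simp
    qed
  qed
  define M where "M = Ems l0 + Q\<^sup>2 / (2 * r l0)"
  have Ext: "Ems l = M - Q\<^sup>2 / (2 * r l)" if "l \<ge> l0" for l
  proof -
    define G where "G s = Ems s + Q\<^sup>2 / (2 * r s)" for s
    have "G l = G l0"
    proof (cases "l = l0")
      case True then show ?thesis by simp
    next
      case False
      then have lt: "l0 < l" using that by simp
      show ?thesis
      proof (rule DERIV_isconst_end[OF lt])
        have "continuous_on {l0..l} Ems" using cEms by (rule continuous_on_subset) (use l0_pos in auto)
        moreover have "continuous_on {l0..l} r" using cr by (rule continuous_on_subset) (use l0_pos in auto)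
        ultimately show "continuous_on {l0..l} G" unfolding G_def
        proof (intro continuous_intros)
          show "\<forall>x\<in>{l0..l}. 2 * r x \<noteq> 0"
          proof
            fix y assume "y \<in> {l0..l}"
            then have "y > 0" using l0_pos by simp
            then show "2 * r y \<noteq> 0" using rpos[of y] by simp
          qed
        qed (auto)
        fix x assume x: "l0 < x" "x < l"
        have xp: "x > 0" using x l0_pos by simp
        have rx: "r x > 0" using rpos xp by simp
        have a: "(r has_real_derivative r1 x) (at x)" using within_to_at dr xp by auto
        have "((\<lambda>s. Q\<^sup>2 / (2 * r s)) has_real_derivative - (Q\<^sup>2 * r1 x) / (2 * (r x)\<^sup>2)) (at x)"
        proof -
          have "((\<lambda>s. Q\<^sup>2 / (2 * r s)) has_real_derivative (0 * (2 * r x) - Q\<^sup>2 * (2 * r1 x)) / ((2 * r x) * (2 * r x))) (at x)"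
            by (rule DERIV_divide[OF DERIV_const DERIV_cmult[OF a]]) (use rx in simp)
          moreover have "(0 * (2 * r x) - Q\<^sup>2 * (2 * r1 x)) / ((2 * r x) * (2 * r x)) = - (Q\<^sup>2 * r1 x) / (2 * (r x)\<^sup>2)"
            using rx by (simp add: field_simps power2_eq_square)
          ultimately show ?thesis by simp
        qed
        from DERIV_add[OF dEms[OF xp] this]
        have "(G has_real_derivative 4 * pi * (r x)\<^sup>2 * (mu x * r1 x + j x * KR x * r x) + - (Q\<^sup>2 * r1 x) / (2 * (r x)\<^sup>2)) (at x)"
          unfolding G_def[abs_def] by simp
        moreover have "4 * pi * (r x)\<^sup>2 * (mu x * r1 x + j x * KR x * r x) + - (Q\<^sup>2 * r1 x) / (2 * (r x)\<^sup>2) = 0"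
        proof -
          have "j x = 0" "muM x = 0" using electrovac x by auto
          moreover have "mu x = (E x)\<^sup>2 / (8 * pi)" using musplit[of x] xp \<open>muM x = 0\<close> by simp
          moreover have "E x = Q / (r x)\<^sup>2" using EQ[of x] x rx by (simp add: field_simps)
          ultimately show ?thesis using rx by (simp add: field_simps power2_eq_square)
        qed
        ultimately show "(G has_real_derivative 0) (at x)" by simp
      qed
    qed
    then show ?thesis unfolding G_def M_def by simp
  qed
  have g_eq: "TT l = 4 / (r l)^4 * ((r l)\<^sup>2 - 2 * M * r l + Q\<^sup>2)" if "l \<ge> l0" for l
  proof -
    have lp: "l > 0" using that l0_pos by simp
    have rp: "r l > 0" using rpos lp by simp
    have "Ems l = M - Q\<^sup>2 / (2 * r l)" using Ext that by simp
    then have "r l / 2 * (1 - (r1 l)\<^sup>2 + (KR l)\<^sup>2 * (r l)\<^sup>2) = M - Q\<^sup>2 / (2 * r l)" by (simp add: Ems_def)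
    then have B: "(r l)\<^sup>2 * ((r1 l)\<^sup>2 - (KR l)\<^sup>2 * (r l)\<^sup>2) = (r l)\<^sup>2 - 2 * M * r l + Q\<^sup>2"
      using rp by (simp add: field_simps power2_eq_square)
    have A: "TT l * (r l)\<^sup>2 = 4 * ((r1 l)\<^sup>2 - (KR l)\<^sup>2 * (r l)\<^sup>2)"
      using TTeq[OF lp] rp by simp
    have "TT l * (r l)^4 = (TT l * (r l)\<^sup>2) * (r l)\<^sup>2" by (simp add: power2_eq_square power4_eq_xxxx)
    also have "\<dots> = 4 * ((r l)\<^sup>2 - 2 * M * r l + Q\<^sup>2)" unfolding A using B by (simp add: algebra_simps)
    finally show ?thesis using rp by (simp add: field_simps)
  qed
  have g_sign: "TT l > 0 \<longleftrightarrow> (r l)\<^sup>2 - 2 * M * r l + Q\<^sup>2 > 0" "TT l = 0 \<longleftrightarrow> (r l)\<^sup>2 - 2 * M * r l + Q\<^sup>2 = 0"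
    if "l \<ge> l0" for l
  proof -
    have "r l > 0" using rpos that l0_pos by simp
    then have "4 / (r l)^4 > 0" by simp
    then show "TT l > 0 \<longleftrightarrow> (r l)\<^sup>2 - 2 * M * r l + Q\<^sup>2 > 0" "TT l = 0 \<longleftrightarrow> (r l)\<^sup>2 - 2 * M * r l + Q\<^sup>2 = 0"
      using g_eq[OF that] sign_help by blast+
  qed
  have big: "\<exists>L\<ge>a. r L \<ge> b" for a b
  proof -
    have "\<forall>\<^sub>F l in at_top. r l \<ge> b" using rinf by (simp add: filterlim_at_top)
    then obtain N where "\<forall>l\<ge>N. r l \<ge> b" by (auto simp: eventually_at_top_linorder)
    then show ?thesis by (intro exI[of _ "max N a"]) auto
  qed
  have Qnz: "Q \<noteq> 0" using Q_nz Q_def by simp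
  show ?thesis
  proof (intro conjI impI allI)
    assume untr: "\<forall>l\<ge>l0. theta_plus r r1 KR l * theta_minus r r1 KR l > 0"
    then have untr': "\<And>l. l \<ge> l0 \<Longrightarrow> TT l > 0" by (simp add: TT_def)
    have r1nz: "r1 l \<noteq> 0" if "l \<ge> l0" for l
    proof
      assume "r1 l = 0"
      have "TT l > 0" using untr' that by simp
      moreover have "TT l = 4 / (r l)\<^sup>2 * (- ((KR l)\<^sup>2 * (r l)\<^sup>2))"
        using TTeq[of l] that l0_pos \<open>r1 l = 0\<close> by simp
      moreover have "4 / (r l)\<^sup>2 * (- ((KR l)\<^sup>2 * (r l)\<^sup>2)) \<le> 0"
        by (intro mult_nonneg_nonpos) auto
      ultimately show False by simp
    qed
    have r1l0: "r1 l0 > 0"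
    proof (rule ccontr)
      assume "\<not> r1 l0 > 0"
      then have neg: "r1 l0 < 0" using r1nz[of l0] by simp
      have neg2: "r1 l < 0" if lge: "l \<ge> l0" for l
      proof (rule ccontr)
        assume "\<not> r1 l < 0"
        then have "r1 l0 \<le> 0" "0 \<le> r1 l" using neg by auto
        moreover have "continuous_on {l0..l} r1" using cr1 by (rule continuous_on_subset) (use l0_pos in auto)
        ultimately obtain y where "l0 \<le> y" "y \<le> l" "r1 y = 0" using IVT'[of r1 l0 0 l] lge by auto
        then show False using r1nz by auto
      qed
      obtain L where L: "L \<ge> l0" "r L \<ge> r l0 + 1" using big by blast
      have "- r l0 \<le> - r L"
      proof (rule DERIV_nonneg_imp_increasing_open[of l0 L "\<lambda>s. - r s"])
        show "l0 \<le> L" using L by simp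
        fix x assume x: "l0 < x" "x < L"
        have "(r has_real_derivative r1 x) (at x)" using within_to_at dr x l0_pos by auto
        then have "((\<lambda>s. - r s) has_real_derivative - r1 x) (at x)" by (rule DERIV_minus)
        moreover have "- r1 x \<ge> 0" using neg2[of x] x by simp
        ultimately show "\<exists>y. ((\<lambda>s. - r s) has_real_derivative y) (at x) \<and> 0 \<le> y" by blast
      next
        have "continuous_on {l0..L} r" using cr by (rule continuous_on_subset) (use l0_pos in auto)
        then show "continuous_on {l0..L} (\<lambda>s. - r s)" by (intro continuous_intros)
      qed
      then show False using L by simp
    qed
    have Ems0: "Ems l0 \<ge> 0"
    proof (rule ccontr)
      assume "\<not> Ems l0 \<ge> 0"
      then have neg: "Ems l0 < 0" by simp
      define S where "S = {0..l0} \<inter> Ems -` {0..}"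
      have "closed S" unfolding S_def
        by (rule continuous_closed_preimage) (use cEms in \<open>auto intro: continuous_on_subset\<close>)
      moreover have "0 \<in> S" unfolding S_def using l0_pos r0 by (simp add: Ems_def)
      moreover have "bdd_above S" unfolding S_def by (rule bdd_aboveI[of _ l0]) auto
      ultimately have laS: "Sup S \<in> S" using closed_contains_Sup by blast
      define la where "la = Sup S"
      have la: "0 \<le> la" "la \<le> l0" "Ems la \<ge> 0" using laS unfolding S_def la_def by auto
      have upper: "x \<le> la" if "x \<in> S" for x
        unfolding la_def by (rule cSup_upper[OF that \<open>bdd_above S\<close>])
      have negx: "Ems x < 0" if "la < x" "x \<le> l0" for x
      proof (rule ccontr)
        assume "\<not> Ems x < 0"
        then have "x \<in> S" unfolding S_def using that la by auto
        then show False using upper that by force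
      qed
      have lalt: "la < l0" using la negx neg by (cases "la = l0") auto
      have big1: "(r1 x)\<^sup>2 > 1 + (KR x)\<^sup>2 * (r x)\<^sup>2" if "la < x" "x \<le> l0" for x
      proof -
        have "r x > 0" using rpos that la by simp
        moreover have "r x / 2 * (1 - (r1 x)\<^sup>2 + (KR x)\<^sup>2 * (r x)\<^sup>2) < 0" using negx[OF that] by (simp add: Ems_def)
        ultimately have "1 - (r1 x)\<^sup>2 + (KR x)\<^sup>2 * (r x)\<^sup>2 < 0" by (simp add: mult_less_0_iff)
        then show ?thesis by simp
      qed
      have r1pos: "r1 x > 0" if xx: "la < x" "x \<le> l0" for x
      proof (rule ccontr)
        assume "\<not> r1 x > 0"
        then have "r1 x \<le> 0" by simp
        moreover have "continuous_on {x..l0} r1" using cr1 by (rule continuous_on_subset) (use that la in auto)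
        ultimately obtain y where "x \<le> y" "y \<le> l0" "r1 y = 0" using IVT'[of r1 x 0 l0] xx r1l0 by auto
        then have yy: "la < y" "y \<le> l0" "r1 y = 0" using xx by auto
        have "1 + (KR y)\<^sup>2 * (r y)\<^sup>2 < (r1 y)\<^sup>2" using big1[OF yy(1,2)] .
        moreover have "(KR y)\<^sup>2 * (r y)\<^sup>2 \<ge> 0" by simp
        ultimately show False using yy(3) by simp
      qed
      have "Ems la \<le> Ems l0"
      proof (rule DERIV_nonneg_imp_increasing_open[of la l0 Ems])
        show "la \<le> l0" using la by simp
        show "continuous_on {la..l0} Ems" using cEms by (rule continuous_on_subset) (use la in auto)
        fix x assume x: "la < x" "x < l0"
        have xp: "x > 0" using x la by simp
        have rx: "r x > 0" using rpos xp by simp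
        have b1: "(r1 x)\<^sup>2 > 1 + (KR x)\<^sup>2 * (r x)\<^sup>2" using big1 x by simp
        have p1: "r1 x > 0" using r1pos x by simp
        have sq: "(\<bar>KR x\<bar> * r x)\<^sup>2 < (r1 x)\<^sup>2" using b1 by (simp add: power_mult_distrib)
        have kr: "\<bar>KR x\<bar> * r x < r1 x"
          using power_less_imp_less_base[OF sq less_imp_le[OF p1]] .
        have dx: "mu x \<ge> \<bar>j x\<bar>" using dec x la by auto
        have "j x * KR x * r x \<ge> - (\<bar>j x\<bar> * (\<bar>KR x\<bar> * r x))"
        proof -
          have "\<bar>j x * KR x * r x\<bar> = \<bar>j x\<bar> * (\<bar>KR x\<bar> * r x)" using rx by (simp add: abs_mult)
          moreover have "- \<bar>j x * KR x * r x\<bar> \<le> j x * KR x * r x" by linarith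
          ultimately show ?thesis by simp
        qed
        moreover have "\<bar>j x\<bar> * (\<bar>KR x\<bar> * r x) \<le> mu x * r1 x"
          using dx kr rx by (intro mult_mono) auto
        ultimately have "mu x * r1 x + j x * KR x * r x \<ge> 0" by linarith
        then have "4 * pi * (r x)\<^sup>2 * (mu x * r1 x + j x * KR x * r x) \<ge> 0" by simp
        then show "\<exists>y. (Ems has_real_derivative y) (at x) \<and> 0 \<le> y" using dEms[OF xp] by blast
      qed
      then show False using la neg by simp
    qed
    show "2 * r l0 > \<bar>E l0 * (r l0)\<^sup>2\<bar>"
    proof (rule ccontr)
      assume "\<not> 2 * r l0 > \<bar>E l0 * (r l0)\<^sup>2\<bar>"
      then have le: "2 * r l0 \<le> \<bar>Q\<bar>" by (simp add: Q_def)
      have Qp: "\<bar>Q\<bar> > 0" using Qnz by simp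
      have "M \<ge> Q\<^sup>2 / (2 * r l0)" using Ems0 M_def by simp
      moreover have "Q\<^sup>2 / (2 * r l0) \<ge> \<bar>Q\<bar>"
      proof -
        have "\<bar>Q\<bar> * (2 * r l0) \<le> \<bar>Q\<bar> * \<bar>Q\<bar>" using le Qp by (intro mult_left_mono) auto
        also have "\<bar>Q\<bar> * \<bar>Q\<bar> = Q\<^sup>2" by (simp add: power2_eq_square abs_mult_self_eq)
        finally show ?thesis using R_pos by (simp add: field_simps)
      qed
      ultimately have MQ: "M \<ge> \<bar>Q\<bar>" by simp
      have "r l0 \<le> M" using MQ le R_pos by simp
      obtain L where L: "L \<ge> l0" "r L \<ge> M" using big by blast
      have "continuous_on {l0..L} r" using cr by (rule continuous_on_subset) (use l0_pos in auto)
      then obtain y where y: "l0 \<le> y" "y \<le> L" "r y = M" using IVT'[of r l0 M L] L \<open>r l0 \<le> M\<close> by auto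
      have "TT y > 0" using untr' y by simp
      then have "M\<^sup>2 - 2 * M * M + Q\<^sup>2 > 0" using g_sign(1)[of y] y by simp
      then have "Q\<^sup>2 > M\<^sup>2" by (simp add: power2_eq_square)
      moreover have "M\<^sup>2 \<ge> Q\<^sup>2" using MQ Qp by (metis abs_ge_zero power2_abs power_mono)
      ultimately show False by simp
    qed
  next
    fix l1 lh
    assume H: "0 \<le> l1 \<and> l1 < lh \<and> l0 \<le> lh
            \<and> (\<forall>l\<in>{l1<..<lh}. theta_plus r r1 KR l * theta_minus r r1 KR l < 0)
            \<and> theta_plus r r1 KR lh * theta_minus r r1 KR lh = 0
            \<and> (\<forall>l>lh. theta_plus r r1 KR l * theta_minus r r1 KR l > 0)"
    have lh: "l0 \<le> lh" using H by simp
    define x where "x = r lh"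
    have xp: "x > 0" using rpos lh l0_pos x_def by simp
    have g0: "x\<^sup>2 - 2 * M * x + Q\<^sup>2 = 0" using g_sign(2)[OF lh] H x_def by (simp add: TT_def)
    have gpos: "(r l)\<^sup>2 - 2 * M * r l + Q\<^sup>2 > 0" if "l > lh" for l
      using g_sign(1)[of l] H that lh by (simp add: TT_def)
    have xM: "x \<ge> M"
    proof (rule ccontr)
      assume "\<not> x \<ge> M"
      then have xl: "x < M" by simp
      obtain L where L: "L \<ge> lh" "r L \<ge> M" using big by blast
      have "continuous_on {lh..L} r" using cr by (rule continuous_on_subset) (use lh l0_pos in auto)
      then obtain y where y: "lh \<le> y" "y \<le> L" "r y = M" using IVT'[of r lh M L] L xl x_def by auto
      have "y \<noteq> lh" using y xl x_def by auto
      then have "M\<^sup>2 - 2 * M * M + Q\<^sup>2 > 0" using gpos[of y] y by simp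
      moreover have "(x - M)\<^sup>2 = M\<^sup>2 - Q\<^sup>2" using g0 by (simp add: power2_eq_square algebra_simps)
      moreover have "(x - M)\<^sup>2 \<ge> 0" by simp
      ultimately show False by (simp add: power2_eq_square)
    qed
    have "Q\<^sup>2 \<le> x\<^sup>2"
    proof -
      have "Q\<^sup>2 = 2 * M * x - x\<^sup>2" using g0 by simp
      also have "\<dots> \<le> 2 * x * x - x\<^sup>2" using xM xp by (simp add: mult_right_mono)
      finally show ?thesis by (simp add: power2_eq_square)
    qed
    then have "\<bar>Q\<bar> \<le> x" using xp by (metis abs_of_pos power2_le_imp_le abs_ge_zero power2_abs)
    then show "r lh \<ge> \<bar>E l0 * (r l0)\<^sup>2\<bar>" using x_def Q_def by simp
    have adm: "adm_mass r r1 KR = M"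
    proof -
      have ev: "\<forall>\<^sub>F l in at_top. M - Q\<^sup>2 / 2 * inverse (r l) = Ems l"
        using Ext by (auto simp: eventually_at_top_linorder field_simps intro!: exI[of _ l0])
      have "((\<lambda>l. M - Q\<^sup>2 / 2 * inverse (r l)) \<longlongrightarrow> M - Q\<^sup>2 / 2 * 0) at_top"
        by (intro tendsto_intros tendsto_inverse_0_at_top rinf)
      then have "(Ems \<longlongrightarrow> M) at_top" using ev by (simp add: tendsto_cong)
      then show ?thesis unfolding adm_mass_def msE by (simp add: tendsto_Lim)
    qed
    show "r lh = \<bar>E l0 * (r l0)\<^sup>2\<bar>" if am: "adm_mass r r1 KR = \<bar>E l0 * (r l0)\<^sup>2\<bar>"
    proof -
      have MQ: "M = \<bar>Q\<bar>" using am adm Q_def by simp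
      have "(x - \<bar>Q\<bar>)\<^sup>2 = 0" using g0 MQ by (simp add: power2_eq_square algebra_simps)
      then show "r lh = \<bar>E l0 * (r l0)\<^sup>2\<bar>" using x_def Q_def by simp
    qed
  qed
qed

end
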